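(* Let $C$ be an open cone containing no lines, with basepoint $b\in C$. If $x,y\in\partial C\setminus\{0\}$ lie on distinct rays (i.e. $y$ is not a positive multiple of $x$), then $B(x)\cap B(y)=\emptyset$, where $B(x):=\{r_{C,x}+f: f\in\mathcal B_C\cap A_C(x)\}$.
   Context: $V$ is a finite-dimensional real vector space. An open cone is a nonempty open convex set $T\subset V$ with $\lambda T\subseteq T$ for all $\lambda>0$ and $0\notin T$; $\partial T$ is its boundary. Write $x\le_C y$ iff $y-x\in\overline C$. $M_C(y/x):=\inf\{\lambda>0:y\le_C\lambda x\}$, $F_C(y,x):=\log M_C(y/x)$, $RF_C(x,y):=F_C(y,x)$. For $p\in\partial C\setminus\{0\}$, $r_{C,p}(x):=RF_C(x,p)-RF_C(b,p)$. A sequence $(x_n)$ in $C$ converges in the Funk sense to $g$ if $F_C(\cdot,x_n)-F_C(b,x_n)\to g$ pointwise on $C$; a Funk horofunction is such a limit not of the form $F_C(\cdot,p)-F_C(b,p)$, $p\in C$; an almost-geodesic is a sequence $(x_l)$ in $C$ with, for some $\epsilon>0$, $\sum_{i=1}^l F_C(x_{i-1},x_i)\le F_C(x_0,x_l)+\epsilon$ for all $l\ge1$; $\mathcal B_C$ is the set of Funk horofunctions that are Funk-sense limits of almost-geodesics. $A_C(x)$ is the set of Funk horofunctions that are Funk-sense limits of sequences in $C$ converging to $x$ in the usual topology. *)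

theory Defs
  imports "HOL-Analysis.Analysis"
begin

definition open_cone :: "'a::euclidean_space set \<Rightarrow> bool" where
  "open_cone T \<longleftrightarrow> T \<noteq> {} \<and> open T \<and> convex T \<and>
     (\<forall>t::real. t > 0 \<longrightarrow> ((*\<^sub>R) t ` T) \<subseteq> T) \<and> 0 \<notin> T"

text \<open>C contains no (affine) lines.\<close>
definition contains_no_lines :: "'a::euclidean_space set \<Rightarrow> bool" where
  "contains_no_lines C \<longleftrightarrow> \<not> (\<exists>a v. v \<noteq> 0 \<and> (\<forall>t::real. a + t *\<^sub>R v \<in> C))"

definition cone_le :: "'a::euclidean_space set \<Rightarrow> 'a \<Rightarrow> 'a \<Rightarrow> bool" where
  "cone_le C x y \<longleftrightarrow> y - x \<in> closure C"

definition M_C :: "'a::euclidean_space set \<Rightarrow> 'a \<Rightarrow> 'a \<Rightarrow> real" where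
  "M_C C y x = Inf {t::real. t > 0 \<and> cone_le C y (t *\<^sub>R x)}"

definition F_C :: "'a::euclidean_space set \<Rightarrow> 'a \<Rightarrow> 'a \<Rightarrow> real" where
  "F_C C y x = ln (M_C C y x)"

definition RF_C :: "'a::euclidean_space set \<Rightarrow> 'a \<Rightarrow> 'a \<Rightarrow> real" where
  "RF_C C x y = F_C C y x"

definition r_C :: "'a::euclidean_space set \<Rightarrow> 'a \<Rightarrow> 'a \<Rightarrow> 'a \<Rightarrow> real" where
  "r_C C b p x = RF_C C x p - RF_C C b p"

text \<open>Funk-sense convergence of a sequence to g (pointwise on C).\<close>
definition funk_conv :: "'a::euclidean_space set \<Rightarrow> 'a \<Rightarrow> (nat \<Rightarrow> 'a) \<Rightarrow> ('a \<Rightarrow> real) \<Rightarrow> bool" where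
  "funk_conv C b xs g \<longleftrightarrow>
     (\<forall>z\<in>C. (\<lambda>n. F_C C z (xs n) - F_C C b (xs n)) \<longlonglongrightarrow> g z)"

definition funk_horofunction :: "'a::euclidean_space set \<Rightarrow> 'a \<Rightarrow> ('a \<Rightarrow> real) \<Rightarrow> bool" where
  "funk_horofunction C b g \<longleftrightarrow>
     (\<exists>xs. (\<forall>n. xs n \<in> C) \<and> funk_conv C b xs g) \<and>
     \<not> (\<exists>p\<in>C. \<forall>z\<in>C. g z = F_C C z p - F_C C b p)"

definition almost_geodesic :: "'a::euclidean_space set \<Rightarrow> (nat \<Rightarrow> 'a) \<Rightarrow> bool" where
  "almost_geodesic C xs \<longleftrightarrow> (\<forall>n. xs n \<in> C) \<and>
     (\<exists>\<epsilon>>0. \<forall>l\<ge>1. (\<Sum>i=1..l. F_C C (xs (i - 1)) (xs i)) \<le> F_C C (xs 0) (xs l) + \<epsilon>)"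

definition B_C :: "'a::euclidean_space set \<Rightarrow> 'a \<Rightarrow> ('a \<Rightarrow> real) set" where
  "B_C C b = {g. funk_horofunction C b g \<and> (\<exists>xs. almost_geodesic C xs \<and> funk_conv C b xs g)}"

definition A_C :: "'a::euclidean_space set \<Rightarrow> 'a \<Rightarrow> 'a \<Rightarrow> ('a \<Rightarrow> real) set" where
  "A_C C b x = {g. funk_horofunction C b g \<and>
     (\<exists>xs. (\<forall>n. xs n \<in> C) \<and> xs \<longlonglongrightarrow> x \<and> funk_conv C b xs g)}"

text \<open>B(x) = {r_{C,x} + f : f in B_C \<inter> A_C(x)}, as functions on C (restricted to C,
  since all these functions are only meaningful on C).\<close>
definition B_set :: "'a::euclidean_space set \<Rightarrow> 'a \<Rightarrow> 'a \<Rightarrow> ('a \<Rightarrow> real) set" where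
  "B_set C b x = {(\<lambda>z. if z \<in> C then r_C C b x z + f z else 0) | f. f \<in> B_C C b \<inter> A_C C b x}"

end

theory Submission
  imports Defs
begin

lemma oc_scale: "open_cone C \<Longrightarrow> c \<in> C \<Longrightarrow> t > 0 \<Longrightarrow> t *\<^sub>R c \<in> C"
  unfolding open_cone_def by blast

lemma cl_scale:
  assumes "open_cone C" "u \<in> closure C" "t > 0"
  shows "t *\<^sub>R u \<in> closure C"
proof -
  have "t *\<^sub>R u \<in> closure (((*\<^sub>R) t) ` C)" using closure_scaleR[of t C] assms(2) by blast
  moreover have "((*\<^sub>R) t) ` C \<subseteq> C" using assms(1,3) unfolding open_cone_def by blast
  ultimately show ?thesis using closure_mono by blast
qed

lemma cl_add:
  assumes "open_cone C" "u \<in> closure C" "v \<in> closure C"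
  shows "u + v \<in> closure C"
proof -
  have cv: "convex (closure C)" using assms(1) convex_closure unfolding open_cone_def by blast
  have "(1/2::real) *\<^sub>R u + (1/2::real) *\<^sub>R v \<in> closure C"
    using convexD[OF cv assms(2,3), of "1/2" "1/2"] by simp
  from cl_scale[OF assms(1) this, of 2] show ?thesis by (simp add: scaleR_add_right)
qed

lemma C_add:
  assumes "open_cone C" "c \<in> C" "d \<in> closure C"
  shows "c + d \<in> C"
proof (cases "c = d")
  case True then show ?thesis using oc_scale[OF assms(1,2), of 2] by (simp add: scaleR_2)
next
  case False
  have oC: "open C" "convex C" using assms(1) unfolding open_cone_def by auto
  have "2 *\<^sub>R c \<in> interior C" using oc_scale[OF assms(1,2), of 2] oC interior_open by auto
  moreover have "2 *\<^sub>R d \<in> closure C" using cl_scale[OF assms(1,3), of 2] by simp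
  ultimately have "open_segment (2 *\<^sub>R c) (2 *\<^sub>R d) \<subseteq> interior C"
    using in_interior_closure_convex_segment[OF oC(2)] by blast
  moreover have "c + d \<in> open_segment (2 *\<^sub>R c) (2 *\<^sub>R d)"
  proof -
    have "c + d = midpoint (2 *\<^sub>R c) (2 *\<^sub>R d)" by (simp add: midpoint_def scaleR_add_right[symmetric])
    moreover have "2 *\<^sub>R c \<noteq> 2 *\<^sub>R d" using False by simp
    ultimately show ?thesis using midpoint_in_open_segment by metis
  qed
  ultimately show ?thesis using oC interior_open by auto
qed

lemma pointed:
  assumes "open_cone C" "contains_no_lines C" "v \<in> closure C" "- v \<in> closure C"
  shows "v = 0"
proof (rule ccontr)
  assume nz: "v \<noteq> 0"
  obtain c where c: "c \<in> C" using assms unfolding open_cone_def by blast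
  have "\<forall>t::real. c + t *\<^sub>R v \<in> C"
  proof
    fix t :: real
    consider "t > 0" | "t = 0" | "t < 0" by linarith
    then show "c + t *\<^sub>R v \<in> C"
    proof cases
      case 1 then show ?thesis using C_add[OF assms(1) c cl_scale[OF assms(1,3) 1]] by simp
    next
      case 2 then show ?thesis using c by simp
    next
      case 3 then have "(-t) *\<^sub>R (-v) \<in> closure C" using cl_scale[OF assms(1,4), of "-t"] by simp
      moreover have "(-t) *\<^sub>R (-v) = t *\<^sub>R v" by simp
      ultimately have "t *\<^sub>R v \<in> closure C" by metis
      then show ?thesis using C_add[OF assms(1) c] by simp
    qed
  qed
  then show False using assms(2) nz unfolding contains_no_lines_def by blast
qed

lemma S_nonempty:
  assumes "open_cone C" "w \<in> C"
  shows "\<exists>t>0. t *\<^sub>R w - y \<in> closure C"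
proof -
  have "open C" using assms unfolding open_cone_def by blast
  then obtain d where d: "d > 0" "ball w d \<subseteq> C" using assms(2) openE by blast
  define t where "t = 2 * (norm y + 1) / d"
  have tp: "t > 0" using d unfolding t_def by (intro divide_pos_pos) (auto intro: add_nonneg_pos)
  have "norm ((1/t) *\<^sub>R y) < d"
  proof -
    have "norm ((1/t) *\<^sub>R y) = norm y * d / (2 * (norm y + 1))" using tp d by (simp add: t_def field_simps)
    also have "\<dots> < d" using d proof -
      have p: "2 * (norm y + 1) > 0" by (simp add: add_nonneg_pos)
      have "norm y * d < d * (2 * (norm y + 1))" using d by (simp add: algebra_simps) (metis add_nonneg_pos mult_nonneg_nonneg norm_ge_zero less_imp_le zero_less_mult_iff zero_less_numeral)
      then show ?thesis using p by (simp add: pos_divide_less_eq)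
    qed
    finally show ?thesis .
  qed
  then have "w - (1/t) *\<^sub>R y \<in> C" using d by (auto simp: dist_norm)
  from oc_scale[OF assms(1) this tp] have "t *\<^sub>R w - y \<in> C" using tp by (simp add: scaleR_diff_right)
  then show ?thesis using tp closure_subset by blast
qed

lemma M_le:
  assumes "t > 0" "t *\<^sub>R w - y \<in> closure C"
  shows "M_C C y w \<le> t"
  unfolding M_C_def cone_le_def
  by (rule cInf_lower) (use assms in \<open>auto intro: bdd_belowI[of _ 0]\<close>)

lemma M_nonneg:
  assumes "open_cone C" "w \<in> C"
  shows "M_C C y w \<ge> 0"
  unfolding M_C_def cone_le_def
  by (rule cInf_greatest) (use S_nonempty[OF assms, of y] in auto)

lemma M_att:
  assumes "open_cone C" "w \<in> C"
  shows "M_C C y w *\<^sub>R w - y \<in> closure C"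
proof -
  let ?S = "{t::real. t > 0 \<and> cone_le C y (t *\<^sub>R w)}"
  have ne: "?S \<noteq> {}" using S_nonempty[OF assms, of y] unfolding cone_le_def by auto
  have bd: "bdd_below ?S" by (auto intro: bdd_belowI[of _ 0])
  have cl: "closed {t::real. t *\<^sub>R w - y \<in> closure C}"
  proof -
    have "closed ((\<lambda>t::real. t *\<^sub>R w - y) -` closure C)"
      by (intro continuous_closed_vimage closed_closure) (intro continuous_intros)
    then show ?thesis by (simp add: vimage_def)
  qed
  have "Inf ?S \<in> closure ?S" by (rule closure_contains_Inf[OF ne bd])
  moreover have "closure ?S \<subseteq> {t::real. t *\<^sub>R w - y \<in> closure C}"
    by (rule closure_minimal) (use cl in \<open>auto simp: cone_le_def\<close>)
  ultimately show ?thesis unfolding M_C_def by blast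
qed

lemma M_pos:
  assumes "open_cone C" "contains_no_lines C" "w \<in> C" "y \<in> closure C" "y \<noteq> 0"
  shows "M_C C y w > 0"
proof (rule ccontr)
  assume "\<not> M_C C y w > 0"
  then have "M_C C y w = 0" using M_nonneg[OF assms(1,3), of y] by linarith
  then have "- y \<in> closure C" using M_att[OF assms(1,3), of y] by simp
  then show False using pointed[OF assms(1,2,4)] assms(5) by blast
qed

lemma M_mono_b:
  assumes "open_cone C" "contains_no_lines C" "w \<in> C" "b \<in> C" "v \<in> closure C"
  shows "M_C C b w \<le> M_C C (b + v) w"
proof -
  have bv: "b + v \<in> C" using C_add[OF assms(1,4,5)] .
  have nz: "b + v \<noteq> 0" using bv assms(1) unfolding open_cone_def by auto
  have pos: "M_C C (b + v) w > 0" using M_pos[OF assms(1,2,3) _ nz] bv closure_subset by blast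
  have "M_C C (b + v) w *\<^sub>R w - b = (M_C C (b + v) w *\<^sub>R w - (b + v)) + v" by simp
  also have "\<dots> \<in> closure C" using cl_add[OF assms(1) M_att[OF assms(1,3)] assms(5)] .
  finally show ?thesis using M_le[OF pos] by blast
qed

lemma g_ge0:
  assumes "open_cone C" "contains_no_lines C" "b \<in> C" "v \<in> closure C"
    and "\<forall>n. ys n \<in> C" and "funk_conv C b ys g"
  shows "g (b + v) \<ge> 0"
proof -
  have bv: "b + v \<in> C" using C_add[OF assms(1,3,4)] .
  have lim: "(\<lambda>n. F_C C (b + v) (ys n) - F_C C b (ys n)) \<longlonglongrightarrow> g (b + v)"
    using assms(6) bv unfolding funk_conv_def by blast
  have "\<forall>n. F_C C (b + v) (ys n) - F_C C b (ys n) \<ge> 0"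
  proof
    fix n
    have nz: "b \<noteq> 0" using assms(1,3) unfolding open_cone_def by auto
    have "M_C C b (ys n) > 0" using M_pos[OF assms(1,2) assms(5)[rule_format, of n] _ nz] assms(3) closure_subset by blast
    moreover have "M_C C b (ys n) \<le> M_C C (b + v) (ys n)" using M_mono_b[OF assms(1,2) assms(5)[rule_format, of n] assms(3,4)] .
    ultimately show "F_C C (b + v) (ys n) - F_C C b (ys n) \<ge> 0" unfolding F_C_def by simp
  qed
  then show ?thesis using tendsto_lowerbound[OF lim] by (simp add: always_eventually)
qed

lemma M_big:
  assumes "open_cone C" "b \<in> C" "x \<in> frontier C"
    and "\<forall>n. xs n \<in> C" and "xs \<longlonglongrightarrow> x" and "T > 0"
  shows "eventually (\<lambda>n. M_C C b (xs n) \<ge> T) sequentially"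
proof -
  have oC: "open C" using assms(1) unfolding open_cone_def by blast
  have xC: "x \<notin> C" using assms(3) oC by (simp add: frontier_def interior_open)
  have nin: "T *\<^sub>R x - b \<notin> closure C"
  proof
    assume "T *\<^sub>R x - b \<in> closure C"
    then have "b + (T *\<^sub>R x - b) \<in> C" using C_add[OF assms(1,2)] by blast
    then have "T *\<^sub>R x \<in> C" by simp
    from oc_scale[OF assms(1) this, of "1/T"] have "x \<in> C" using assms(6) by simp
    then show False using xC by blast
  qed
  have "(\<lambda>n. T *\<^sub>R xs n - b) \<longlonglongrightarrow> T *\<^sub>R x - b"
    by (intro tendsto_intros assms(5))
  then have ev: "eventually (\<lambda>n. T *\<^sub>R xs n - b \<in> - closure C) sequentially"
    using topological_tendstoD[of _ _ _ "- closure C"] nin by blast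
  show ?thesis
  proof (rule eventually_mono[OF ev])
    fix n assume n: "T *\<^sub>R xs n - b \<in> - closure C"
    show "M_C C b (xs n) \<ge> T"
    proof (rule ccontr)
      assume "\<not> M_C C b (xs n) \<ge> T"
      then have lt: "T - M_C C b (xs n) > 0" by simp
      have "T *\<^sub>R xs n - b = (M_C C b (xs n) *\<^sub>R xs n - b) + (T - M_C C b (xs n)) *\<^sub>R xs n"
        by (simp add: algebra_simps)
      also have "\<dots> \<in> closure C"
        using cl_add[OF assms(1) M_att[OF assms(1) assms(4)[rule_format, of n]]
            cl_scale[OF assms(1) _ lt]] assms(4) closure_subset by blast
      finally show False using n by blast
    qed
  qed
qed

lemma f_le_ln:
  assumes "open_cone C" "contains_no_lines C" "b \<in> C" "x \<in> frontier C"
    and "\<forall>n. xs n \<in> C" and "xs \<longlonglongrightarrow> x" and "funk_conv C b xs f"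
    and "s > 0" and "lam > 1"
  shows "f (b + s *\<^sub>R x) \<le> ln (2 * lam - 1)"
proof -
  let ?z = "b + s *\<^sub>R x"
  have oC: "open C" using assms(1) unfolding open_cone_def by blast
  have xcl: "x \<in> closure C" using assms(4) by (simp add: frontier_def)
  have zC: "?z \<in> C" using C_add[OF assms(1,3) cl_scale[OF assms(1) xcl assms(8)]] .
  have lim: "(\<lambda>n. F_C C ?z (xs n) - F_C C b (xs n)) \<longlonglongrightarrow> f ?z"
    using assms(7) zC unfolding funk_conv_def by blast
  have bl: "(lam - 1) *\<^sub>R b \<in> C" using oc_scale[OF assms(1,3)] assms(9) by simp
  have "(\<lambda>n. (lam - 1) *\<^sub>R b - s *\<^sub>R (x - xs n)) \<longlonglongrightarrow> (lam - 1) *\<^sub>R b - s *\<^sub>R (x - x)"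
    by (intro tendsto_intros assms(6))
  then have ev1: "eventually (\<lambda>n. (lam - 1) *\<^sub>R b - s *\<^sub>R (x - xs n) \<in> C) sequentially"
    using topological_tendstoD[OF _ oC] bl by simp
  have ev2: "eventually (\<lambda>n. M_C C b (xs n) \<ge> s / (lam - 1)) sequentially"
    using M_big[OF assms(1,3,4,5,6)] assms(8,9) by simp
  have "eventually (\<lambda>n. F_C C ?z (xs n) - F_C C b (xs n) \<le> ln (2 * lam - 1)) sequentially"
  proof (rule eventually_mono[OF eventually_conj[OF ev1 ev2]])
    fix n
    assume h: "(lam - 1) *\<^sub>R b - s *\<^sub>R (x - xs n) \<in> C \<and> M_C C b (xs n) \<ge> s / (lam - 1)"
    define w where "w = xs n"
    define m where "m = M_C C b w"
    have wC: "w \<in> C" using assms(5) w_def by blast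
    have nz: "b \<noteq> 0" using assms(1,3) unfolding open_cone_def by auto
    have mpos: "m > 0" using M_pos[OF assms(1,2) wC _ nz] assms(3) closure_subset m_def by blast
    have zne: "?z \<noteq> 0" using zC assms(1) unfolding open_cone_def by auto
    have Mzpos: "M_C C ?z w > 0" using M_pos[OF assms(1,2) wC _ zne] zC closure_subset by blast
    have Tpos: "lam * m + s > 0" using mpos assms(8,9) by (simp add: add_pos_pos)
    have "(lam * m + s) *\<^sub>R w - ?z = lam *\<^sub>R (m *\<^sub>R w - b) + ((lam - 1) *\<^sub>R b - s *\<^sub>R (x - w))"
      by (simp add: algebra_simps)
    also have "\<dots> \<in> closure C"
    proof -
      have "m *\<^sub>R w - b \<in> closure C" using M_att[OF assms(1) wC] m_def by simp
      then have a: "lam *\<^sub>R (m *\<^sub>R w - b) \<in> closure C" using cl_scale[OF assms(1)] assms(9) by simp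
      have "(lam - 1) *\<^sub>R b - s *\<^sub>R (x - w) \<in> closure C" using h w_def closure_subset by blast
      then show ?thesis using cl_add[OF assms(1) a] by blast
    qed
    finally have Mz: "M_C C ?z w \<le> lam * m + s" using M_le[OF Tpos] by blast
    have "s / m \<le> lam - 1" using h mpos assms(9) w_def m_def by (simp add: field_simps)
    then have "lam * m + s \<le> (2 * lam - 1) * m" using mpos by (simp add: field_simps)
    then have "M_C C ?z w \<le> (2 * lam - 1) * m" using Mz by linarith
    then have "ln (M_C C ?z w) \<le> ln ((2 * lam - 1) * m)" using Mzpos by simp
    also have "\<dots> = ln (2 * lam - 1) + ln m" using mpos assms(9) by (simp add: ln_mult)
    finally show "F_C C ?z (xs n) - F_C C b (xs n) \<le> ln (2 * lam - 1)"
      unfolding F_C_def w_def[symmetric] m_def[symmetric] by simp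
  qed
  then show ?thesis using tendsto_upperbound[OF lim] by simp
qed

lemma f_le0:
  assumes "open_cone C" "contains_no_lines C" "b \<in> C" "x \<in> frontier C"
    and "\<forall>n. xs n \<in> C" and "xs \<longlonglongrightarrow> x" and "funk_conv C b xs f"
    and "s > 0"
  shows "f (b + s *\<^sub>R x) \<le> 0"
proof (rule field_le_epsilon)
  fix e :: real assume e: "e > 0"
  have "f (b + s *\<^sub>R x) \<le> ln (2 * (1 + e/2) - 1)"
    using f_le_ln[OF assms, of "1 + e/2"] e by simp
  also have "\<dots> = ln (1 + e)" by simp
  also have "\<dots> \<le> e" using e by (simp add: ln_add_one_self_le_self)
  finally show "f (b + s *\<^sub>R x) \<le> 0 + e" by simp
qed

lemma M_up:
  assumes "open_cone C" "w \<in> C" "t \<ge> M_C C y w"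
  shows "t *\<^sub>R w - y \<in> closure C"
proof (cases "t = M_C C y w")
  case True then show ?thesis using M_att[OF assms(1,2)] by simp
next
  case False
  then have d: "t - M_C C y w > 0" using assms(3) by simp
  have "t *\<^sub>R w - y = (M_C C y w *\<^sub>R w - y) + (t - M_C C y w) *\<^sub>R w" by (simp add: algebra_simps)
  also have "\<dots> \<in> closure C"
    using cl_add[OF assms(1) M_att[OF assms(1,2)] cl_scale[OF assms(1) _ d]] assms(2) closure_subset by blast
  finally show ?thesis .
qed

lemma key:
  assumes oc: "open_cone C" and nl: "contains_no_lines C" and bC: "b \<in> C"
    and xf: "x \<in> frontier C" and xnz: "x \<noteq> 0" and ycl: "y \<in> closure C" and ynz: "y \<noteq> 0"
    and xs: "\<forall>n. xs n \<in> C" "xs \<longlonglongrightarrow> x" "funk_conv C b xs f"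
    and ys: "\<forall>n. ys n \<in> C" "funk_conv C b ys g"
    and eq: "\<forall>z\<in>C. r_C C b x z + f z = r_C C b y z + g z"
  shows "(M_C C y b / M_C C x b) *\<^sub>R x - y \<in> closure C"
proof -
  have xcl: "x \<in> closure C" using xf by (simp add: frontier_def)
  define mx where "mx = M_C C x b"
  define my where "my = M_C C y b"
  define K where "K = my / mx"
  have mx: "mx > 0" using M_pos[OF oc nl bC xcl xnz] mx_def by simp
  have my: "my > 0" using M_pos[OF oc nl bC ycl ynz] my_def by simp
  have Kp: "K > 0" using mx my K_def by simp
  have main: "(K / s) *\<^sub>R b + (K *\<^sub>R x - y) \<in> closure C" if s: "s > 0" for s :: real
  proof -
    define z where "z = b + s *\<^sub>R x"
    have zC: "z \<in> C" using C_add[OF oc bC cl_scale[OF oc xcl s]] z_def by simp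
    have fz: "f z \<le> 0" using f_le0[OF oc nl bC xf xs s] z_def by simp
    have gz: "g z \<ge> 0" using g_ge0[OF oc nl bC cl_scale[OF oc xcl s] ys] z_def by simp
    have Mxz: "M_C C x z > 0" using M_pos[OF oc nl zC xcl xnz] .
    have Myz: "M_C C y z > 0" using M_pos[OF oc nl zC ycl ynz] .
    have "(1/s) *\<^sub>R z - x = (1/s) *\<^sub>R b" using s by (simp add: z_def algebra_simps)
    also have "\<dots> \<in> closure C" using oc_scale[OF oc bC, of "1/s"] s closure_subset by auto
    finally have Mxz1: "M_C C x z \<le> 1/s" using M_le[of "1/s"] s by simp
    have "r_C C b x z + f z = r_C C b y z + g z" using eq zC by blast
    then have "ln (M_C C x z) - ln mx + f z = ln (M_C C y z) - ln my + g z"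
      unfolding r_C_def RF_C_def F_C_def mx_def my_def by simp
    then have "ln (M_C C y z) \<le> ln (M_C C x z) - ln mx + ln my" using fz gz by linarith
    also have "\<dots> \<le> ln (1/s) - ln mx + ln my" using Mxz Mxz1 s by (simp del: ln_div)
    also have "\<dots> = ln (K / s)" using s mx my K_def by (simp add: ln_div ln_mult)
    finally have "M_C C y z \<le> K / s" using Myz Kp s by simp
    then have "(K / s) *\<^sub>R z - y \<in> closure C" using M_up[OF oc zC] by blast
    moreover have "(K / s) *\<^sub>R z - y = (K / s) *\<^sub>R b + (K *\<^sub>R x - y)"
      using s by (simp add: z_def algebra_simps)
    ultimately show ?thesis by simp
  qed
  have lim: "(\<lambda>n. (K / real (Suc n)) *\<^sub>R b + (K *\<^sub>R x - y)) \<longlonglongrightarrow> 0 *\<^sub>R b + (K *\<^sub>R x - y)"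
  proof (intro tendsto_intros)
    show "(\<lambda>n. K / real (Suc n)) \<longlonglongrightarrow> 0"
      using tendsto_mult[OF tendsto_const[of K] LIMSEQ_inverse_real_of_nat] by (simp add: divide_inverse)
  qed
  have "K *\<^sub>R x - y \<in> closure C"
    using closed_sequentially[OF closed_closure _ lim] main by simp
  then show ?thesis unfolding K_def mx_def my_def .
qed

theorem mainTheorem9:
  fixes C :: "'a::euclidean_space set" and b x y :: 'a
  assumes "open_cone C" and "contains_no_lines C" and "b \<in> C"
    and "x \<in> frontier C - {0}" and "y \<in> frontier C - {0}"
    and "\<not> (\<exists>t::real. t > 0 \<and> y = t *\<^sub>R x)"
  shows "B_set C b x \<inter> B_set C b y = {}"
proof (rule ccontr)
  assume "B_set C b x \<inter> B_set C b y \<noteq> {}"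
  then obtain h where hx: "h \<in> B_set C b x" and hy: "h \<in> B_set C b y" by blast
  from hx obtain f where hf: "h = (\<lambda>z. if z \<in> C then r_C C b x z + f z else 0)" and fA: "f \<in> A_C C b x"
    unfolding B_set_def by blast
  from hy obtain g where hg: "h = (\<lambda>z. if z \<in> C then r_C C b y z + g z else 0)" and gA: "g \<in> A_C C b y"
    unfolding B_set_def by blast
  from fA obtain xs where xs: "\<forall>n. xs n \<in> C" "xs \<longlonglongrightarrow> x" "funk_conv C b xs f"
    unfolding A_C_def by blast
  from gA obtain ys where ys: "\<forall>n. ys n \<in> C" "ys \<longlonglongrightarrow> y" "funk_conv C b ys g"
    unfolding A_C_def by blast
  have eq: "\<forall>z\<in>C. r_C C b x z + f z = r_C C b y z + g z"
  proof
    fix z assume "z \<in> C"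
    then show "r_C C b x z + f z = r_C C b y z + g z" using fun_cong[OF trans[OF hf[symmetric] hg], of z] by simp
  qed
  have eq': "\<forall>z\<in>C. r_C C b y z + g z = r_C C b x z + f z" using eq by simp
  have xf: "x \<in> frontier C" "x \<noteq> 0" and yf: "y \<in> frontier C" "y \<noteq> 0" using assms(4,5) by auto
  have xcl: "x \<in> closure C" and ycl: "y \<in> closure C" using xf yf by (auto simp: frontier_def)
  define mx where "mx = M_C C x b"
  define my where "my = M_C C y b"
  have mx: "mx > 0" using M_pos[OF assms(1,2,3) xcl xf(2)] mx_def by simp
  have my: "my > 0" using M_pos[OF assms(1,2,3) ycl yf(2)] my_def by simp
  define K where "K = my / mx"
  have Kp: "K > 0" using mx my K_def by simp
  have k1: "K *\<^sub>R x - y \<in> closure C"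
    using key[OF assms(1,2,3) xf ycl yf(2) xs ys(1,3) eq] unfolding K_def mx_def my_def .
  have k2: "(mx / my) *\<^sub>R y - x \<in> closure C"
    using key[OF assms(1,2,3) yf xcl xf(2) ys xs(1,3) eq'] unfolding mx_def my_def .
  have "K *\<^sub>R ((mx / my) *\<^sub>R y - x) = y - K *\<^sub>R x"
    using mx my K_def by (simp add: algebra_simps)
  then have "- (K *\<^sub>R x - y) \<in> closure C" using cl_scale[OF assms(1) k2 Kp] by simp
  then have "K *\<^sub>R x - y = 0" using pointed[OF assms(1,2) k1] by blast
  then have "y = K *\<^sub>R x" by simp
  then show False using assms(6) Kp by blast
qed

end
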